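(* For integers $n\ge 1$ and $k\ge 1$, let $a_{n,k}$ be the number of permutations $\pi=\pi_1\cdots\pi_n\in\mathcal{S}_n$ such that (i) there is no $i$ with $\pi_i\pi_{i+1}\pi_{i+2}$ order isomorphic to $231$, (ii) there is no $i$ with $\pi_i\pi_{i+1}\pi_{i+2}$ order isomorphic to $132$, and (iii) there is no $i$ with $\pi_{i+k}=\pi_i+1$ (i.e. $\pi$ avoids the place-difference-value pattern $(12,(\mathbb{P},\{k\},\mathbb{P}),\{(1,2,\{1\})\},(\mathbb{P},\mathbb{P}))$). Then $$a_{n,k}=\begin{cases}F(n) & \text{if } k=1,\\ 2^{n-1} & \text{if } k\ge 2 \text{ and } n\le k,\\ 3\cdot 2^{n-3} & \text{if } k\ge 2\text{ and } n\ge k+1,\end{cases}$$ where $F(n)$ is the $n$-th Fibonacci number, $F(1)=F(2)=1$, $F(n)=F(n-1)+F(n-2)$.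
   Context: $\mathcal{S}_n$ is the set of permutations of $\{1,\dots,n\}$ written as words; $\mathbb{P}$ is the set of positive integers. Conditions (i) and (ii) say $\pi$ avoids the consecutive (generalized) patterns $231$ and $132$. *)

theory Defs
  imports "HOL-Combinatorics.Multiset_Permutations" "HOL-Number_Theory.Fib"
begin

text \<open>Permutations of {1..n} are lists (words); indices are 0-based here.\<close>

definition has_consec_231 :: "nat list \<Rightarrow> bool" where
  "has_consec_231 xs \<longleftrightarrow> (\<exists>i. i + 2 < length xs \<and>
      xs ! (i+2) < xs ! i \<and> xs ! i < xs ! (i+1))"

definition has_consec_132 :: "nat list \<Rightarrow> bool" where
  "has_consec_132 xs \<longleftrightarrow> (\<exists>i. i + 2 < length xs \<and>
      xs ! i < xs ! (i+2) \<and> xs ! (i+2) < xs ! (i+1))"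

definition has_pdv_k :: "nat \<Rightarrow> nat list \<Rightarrow> bool" where
  "has_pdv_k k xs \<longleftrightarrow> (\<exists>i. i + k < length xs \<and> xs ! (i+k) = xs ! i + 1)"

definition a_nk :: "nat \<Rightarrow> nat \<Rightarrow> nat" where
  "a_nk n k = card {xs \<in> permutations_of_set {1..n}.
      \<not> has_consec_231 xs \<and> \<not> has_consec_132 xs \<and> \<not> has_pdv_k k xs}"

end

theory Submission imports Defs begin

lemma c231_cons: assumes "\<forall>x\<in>set ys. x < n"
  shows "has_consec_231 (n#ys) \<longleftrightarrow> has_consec_231 ys"
proof
  assume "has_consec_231 (n#ys)"
  then obtain i where i: "i + 2 < length (n#ys)" "(n#ys) ! (i+2) < (n#ys) ! i" "(n#ys) ! i < (n#ys) ! (i+1)"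
    unfolding has_consec_231_def by blast
  show "has_consec_231 ys"
  proof (cases i)
    case 0 then show ?thesis using i assms by (auto simp: numeral_2_eq_2; metis nth_mem Suc_lessD less_asym)
  next
    case (Suc j) then show ?thesis using i unfolding has_consec_231_def
      by (intro exI[of _ j]) (auto simp: numeral_2_eq_2)
  qed
next
  assume "has_consec_231 ys"
  then obtain i where i: "i + 2 < length ys" "ys ! (i+2) < ys ! i" "ys ! i < ys ! (i+1)"
    unfolding has_consec_231_def by blast
  show "has_consec_231 (n#ys)" unfolding has_consec_231_def
    using i by (intro exI[of _ "Suc i"]) (auto simp: numeral_2_eq_2)
qed

lemma c132_cons: assumes "\<forall>x\<in>set ys. x < n"
  shows "has_consec_132 (n#ys) \<longleftrightarrow> has_consec_132 ys"
proof
  assume "has_consec_132 (n#ys)"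
  then obtain i where i: "i + 2 < length (n#ys)" "(n#ys) ! i < (n#ys) ! (i+2)" "(n#ys) ! (i+2) < (n#ys) ! (i+1)"
    unfolding has_consec_132_def by blast
  show "has_consec_132 ys"
  proof (cases i)
    case 0 then show ?thesis using i assms by (auto simp: numeral_2_eq_2; metis nth_mem Suc_lessD less_asym)
  next
    case (Suc j) then show ?thesis using i unfolding has_consec_132_def
      by (intro exI[of _ j]) (auto simp: numeral_2_eq_2)
  qed
next
  assume "has_consec_132 ys"
  then obtain i where i: "i + 2 < length ys" "ys ! i < ys ! (i+2)" "ys ! (i+2) < ys ! (i+1)"
    unfolding has_consec_132_def by blast
  show "has_consec_132 (n#ys)" unfolding has_consec_132_def
    using i by (intro exI[of _ "Suc i"]) (auto simp: numeral_2_eq_2)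
qed

lemma c231_snoc: assumes "\<forall>x\<in>set ys. x < n"
  shows "has_consec_231 (ys@[n]) \<longleftrightarrow> has_consec_231 ys"
proof
  assume "has_consec_231 (ys@[n])"
  then obtain i where i: "i + 2 < length (ys@[n])" "(ys@[n]) ! (i+2) < (ys@[n]) ! i" "(ys@[n]) ! i < (ys@[n]) ! (i+1)"
    unfolding has_consec_231_def by blast
  show "has_consec_231 ys"
  proof (cases "i + 2 < length ys")
    case True then show ?thesis using i unfolding has_consec_231_def
      by (intro exI[of _ i]) (auto simp: nth_append)
  next
    case False
    then have "i + 2 = length ys" using i by simp
    then have "i < length ys" by simp
    then have "ys ! i \<in> set ys" by (rule nth_mem)
    then have "ys ! i < n" using assms by blast
    then show ?thesis using i \<open>i + 2 = length ys\<close> by (simp add: nth_append)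
  qed
next
  assume "has_consec_231 ys"
  then obtain i where i: "i + 2 < length ys" "ys ! (i+2) < ys ! i" "ys ! i < ys ! (i+1)"
    unfolding has_consec_231_def by blast
  show "has_consec_231 (ys@[n])" unfolding has_consec_231_def
    using i by (intro exI[of _ i]) (auto simp: nth_append)
qed

lemma c132_snoc: assumes "\<forall>x\<in>set ys. x < n"
  shows "has_consec_132 (ys@[n]) \<longleftrightarrow> has_consec_132 ys"
proof
  assume "has_consec_132 (ys@[n])"
  then obtain i where i: "i + 2 < length (ys@[n])" "(ys@[n]) ! i < (ys@[n]) ! (i+2)" "(ys@[n]) ! (i+2) < (ys@[n]) ! (i+1)"
    unfolding has_consec_132_def by blast
  show "has_consec_132 ys"
  proof (cases "i + 2 < length ys")
    case True then show ?thesis using i unfolding has_consec_132_def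
      by (intro exI[of _ i]) (auto simp: nth_append)
  next
    case False
    then have "i + 2 = length ys" using i by simp
    then have "i + 1 < length ys" by simp
    then show ?thesis using i assms \<open>i + 2 = length ys\<close> by (auto simp: nth_append; metis nth_mem less_asym lessI)
  qed
next
  assume "has_consec_132 ys"
  then obtain i where i: "i + 2 < length ys" "ys ! i < ys ! (i+2)" "ys ! (i+2) < ys ! (i+1)"
    unfolding has_consec_132_def by blast
  show "has_consec_132 (ys@[n])" unfolding has_consec_132_def
    using i by (intro exI[of _ i]) (auto simp: nth_append)
qed

lemma pdv_cons: assumes "\<forall>x\<in>set ys. x < n" "k \<ge> 1"
  shows "has_pdv_k k (n#ys) \<longleftrightarrow> has_pdv_k k ys"
proof
  assume "has_pdv_k k (n#ys)"
  then obtain i where i: "i + k < length (n#ys)" "(n#ys) ! (i+k) = (n#ys) ! i + 1"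
    unfolding has_pdv_k_def by blast
  show "has_pdv_k k ys"
  proof (cases i)
    case 0
    obtain j where "k = Suc j" using assms(2) by (cases k) auto
    then show ?thesis using i assms 0 by (auto dest!: nth_mem)
  next
    case (Suc j) then show ?thesis using i unfolding has_pdv_k_def
      by (intro exI[of _ j]) auto
  qed
next
  assume "has_pdv_k k ys"
  then obtain i where i: "i + k < length ys" "ys ! (i+k) = ys ! i + 1"
    unfolding has_pdv_k_def by blast
  show "has_pdv_k k (n#ys)" unfolding has_pdv_k_def
    using i by (intro exI[of _ "Suc i"]) auto
qed

lemma pdv_snoc: assumes "k \<ge> 1"
  shows "has_pdv_k k (ys@[n]) \<longleftrightarrow> has_pdv_k k ys \<or> (k \<le> length ys \<and> ys ! (length ys - k) + 1 = n)"
proof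
  assume "has_pdv_k k (ys@[n])"
  then obtain i where i: "i + k < length (ys@[n])" "(ys@[n]) ! (i+k) = (ys@[n]) ! i + 1"
    unfolding has_pdv_k_def by blast
  show "has_pdv_k k ys \<or> (k \<le> length ys \<and> ys ! (length ys - k) + 1 = n)"
  proof (cases "i + k < length ys")
    case True then show ?thesis using i unfolding has_pdv_k_def
      by (intro disjI1 exI[of _ i]) (auto simp: nth_append)
  next
    case False
    then have "i + k = length ys" using i by simp
    then have "length ys - k = i" by simp
    then show ?thesis using i assms \<open>i + k = length ys\<close> by (auto simp: nth_append)
  qed
next
  assume "has_pdv_k k ys \<or> (k \<le> length ys \<and> ys ! (length ys - k) + 1 = n)"
  then show "has_pdv_k k (ys@[n])"
  proof
    assume "has_pdv_k k ys"
    then obtain i where i: "i + k < length ys" "ys ! (i+k) = ys ! i + 1"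
      unfolding has_pdv_k_def by blast
    show "has_pdv_k k (ys@[n])" unfolding has_pdv_k_def
      using i by (intro exI[of _ i]) (auto simp: nth_append)
  next
    assume h: "k \<le> length ys \<and> ys ! (length ys - k) + 1 = n"
    show "has_pdv_k k (ys@[n])" unfolding has_pdv_k_def
      using h assms by (intro exI[of _ "length ys - k"]) (auto simp: nth_append)
  qed
qed


definition G :: "nat \<Rightarrow> nat \<Rightarrow> nat list set" where
  "G k n = {xs \<in> permutations_of_set {1..n}.
      \<not> has_consec_231 xs \<and> \<not> has_consec_132 xs \<and> \<not> has_pdv_k k xs}"

lemma G_mem: assumes "xs \<in> G k m"
  shows "set xs = {1..m}" "distinct xs" "length xs = m"
proof -
  show s: "set xs = {1..m}" and d: "distinct xs"
    using assms by (auto simp: G_def permutations_of_set_def)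
  have "length xs = card (set xs)" using d by (simp add: distinct_card)
  then show "length xs = m" using s by simp
qed

lemma G_fin: "finite (G k n)"
  by (rule finite_subset[of _ "permutations_of_set {1..n}"]) (auto simp: G_def)

lemma max_end: assumes "xs \<in> G k n" "n \<ge> 2"
  shows "\<exists>ys. xs = n#ys \<or> xs = ys@[n]"
proof -
  note m = G_mem[OF assms(1)]
  have "n \<in> set xs" using m(1) assms(2) by simp
  then obtain p where p: "p < length xs" "xs ! p = n" by (metis in_set_conv_nth)
  show ?thesis
  proof (cases "p = 0")
    case True
    then have "xs = n # tl xs" using p by (cases xs) auto
    then show ?thesis by blast
  next
    case False
    show ?thesis
    proof (cases "p = length xs - 1")
      case True
      have "xs \<noteq> []" using p by auto
      then have "xs = butlast xs @ [last xs]" by simp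
      moreover have "last xs = n" using True p \<open>xs \<noteq> []\<close> by (simp add: last_conv_nth)
      ultimately show ?thesis by metis
    next
      case F2: False
      define i where "i = p - 1"
      have ip: "i + 1 = p" "i + 2 < length xs" using False F2 p unfolding i_def by auto
      have ne1: "xs ! i \<noteq> n" using m(2) p ip by (metis nth_eq_iff_index_eq less_trans lessI add_lessD1 n_not_Suc_n Suc_eq_plus1)
      have ne2: "xs ! (i+2) \<noteq> n" using m(2) p ip
        by (metis nth_eq_iff_index_eq add_2_eq_Suc' Suc_eq_plus1 n_not_Suc_n)
      have ne3: "xs ! i \<noteq> xs ! (i+2)" using m(2) ip by (simp add: nth_eq_iff_index_eq)
      have "xs ! i \<in> set xs" "xs ! (i+2) \<in> set xs" using ip by auto
      then have "xs ! i \<le> n" "xs ! (i+2) \<le> n" using m(1) by auto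
      then have lt: "xs ! i < xs ! (i+1)" "xs ! (i+2) < xs ! (i+1)" using ne1 ne2 ip p by auto
      have "has_consec_231 xs \<or> has_consec_132 xs"
      proof (cases "xs ! (i+2) < xs ! i")
        case True then show ?thesis unfolding has_consec_231_def using lt ip by blast
      next
        case False then have "xs ! i < xs ! (i+2)" using ne3 by simp
        then show ?thesis unfolding has_consec_132_def using lt ip by blast
      qed
      then show ?thesis using assms(1) by (auto simp: G_def)
    qed
  qed
qed

lemma set_cons_iff: fixes n :: nat assumes "n \<ge> 1"
  shows "(set (n#ys) = {1..n} \<and> distinct (n#ys)) \<longleftrightarrow> (set ys = {1..n-1} \<and> distinct ys)"
proof
  assume h: "set (n#ys) = {1..n} \<and> distinct (n#ys)"
  then have "n \<notin> set ys" by simp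
  moreover have "insert n (set ys) = {1..n}" using h by simp
  ultimately have "set ys = {1..n} - {n}" by blast
  also have "\<dots> = {1..n-1}" using assms by (auto simp: le_diff_conv2)
  finally show "set ys = {1..n-1} \<and> distinct ys" using h by simp
next
  assume h: "set ys = {1..n-1} \<and> distinct ys"
  then show "set (n#ys) = {1..n} \<and> distinct (n#ys)" using assms by auto
qed

lemma set_snoc_iff: fixes n :: nat assumes "n \<ge> 1"
  shows "(set (ys@[n]) = {1..n} \<and> distinct (ys@[n])) \<longleftrightarrow> (set ys = {1..n-1} \<and> distinct ys)"
  using set_cons_iff[OF assms, of ys] by auto

lemma G_dec: assumes "n \<ge> 2" "k \<ge> 1"
  shows "G k n = Cons n ` G k (n-1) \<union>
     (\<lambda>ys. ys@[n]) ` {ys \<in> G k (n-1). \<not> (k \<le> n-1 \<and> ys ! (n-1-k) = n-1)}"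
    (is "_ = ?A \<union> ?B")
proof
  show "G k n \<subseteq> ?A \<union> ?B"
  proof
    fix xs assume xs: "xs \<in> G k n"
    note m = G_mem[OF xs]
    obtain ys where "xs = n#ys \<or> xs = ys@[n]" using max_end[OF xs assms(1)] by blast
    then show "xs \<in> ?A \<union> ?B"
    proof
      assume e: "xs = n#ys"
      have sy: "set ys = {1..n-1} \<and> distinct ys" using m e set_cons_iff[of n ys] assms by auto
      then have lt: "\<forall>x\<in>set ys. x < n" using assms by auto
      have "ys \<in> G k (n-1)" using xs e sy lt assms
        by (auto simp: G_def permutations_of_set_def c231_cons c132_cons pdv_cons)
      then show ?thesis using e by blast
    next
      assume e: "xs = ys@[n]"
      have sy: "set ys = {1..n-1} \<and> distinct ys" using m e set_snoc_iff[of n ys] assms by auto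
      then have lt: "\<forall>x\<in>set ys. x < n" using assms by auto
      have ly: "length ys = n - 1" using m e by simp
      have "ys \<in> G k (n-1)" using xs e sy lt assms
        by (auto simp: G_def permutations_of_set_def c231_snoc c132_snoc pdv_snoc)
      moreover have "\<not> (k \<le> n-1 \<and> ys ! (n-1-k) = n-1)"
        using xs e lt assms ly by (auto simp: G_def pdv_snoc)
      ultimately show ?thesis using e by blast
    qed
  qed
next
  show "?A \<union> ?B \<subseteq> G k n"
  proof
    fix xs assume "xs \<in> ?A \<union> ?B"
    then show "xs \<in> G k n"
    proof
      assume "xs \<in> ?A"
      then obtain ys where e: "xs = n#ys" and ys: "ys \<in> G k (n-1)" by blast
      note m = G_mem[OF ys]
      have lt: "\<forall>x\<in>set ys. x < n" using m assms by auto
      have "set xs = {1..n} \<and> distinct xs" using e m set_cons_iff[of n ys] assms by auto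
      then show ?thesis using ys e lt assms
        by (auto simp: G_def permutations_of_set_def c231_cons c132_cons pdv_cons)
    next
      assume "xs \<in> ?B"
      then obtain ys where e: "xs = ys@[n]" and ys: "ys \<in> G k (n-1)"
         and c: "\<not> (k \<le> n-1 \<and> ys ! (n-1-k) = n-1)" by blast
      note m = G_mem[OF ys]
      have lt: "\<forall>x\<in>set ys. x < n" using m assms by auto
      have "set xs = {1..n} \<and> distinct xs" using e m set_snoc_iff[of n ys] assms by auto
      then show ?thesis using ys e lt assms c m(3)
        by (auto simp: G_def permutations_of_set_def c231_snoc c132_snoc pdv_snoc)
    qed
  qed
qed

lemma card_G_dec: assumes "n \<ge> 2" "k \<ge> 1"
  shows "card (G k n) = card (G k (n-1)) + card {ys \<in> G k (n-1). \<not> (k \<le> n-1 \<and> ys ! (n-1-k) = n-1)}"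
proof -
  let ?C = "{ys \<in> G k (n-1). \<not> (k \<le> n-1 \<and> ys ! (n-1-k) = n-1)}"
  have disj: "Cons n ` G k (n-1) \<inter> (\<lambda>ys. ys@[n]) ` ?C = {}"
  proof (rule ccontr)
    assume "Cons n ` G k (n-1) \<inter> (\<lambda>ys. ys@[n]) ` ?C \<noteq> {}"
    then obtain ys zs where "n # ys = zs @ [n]" "zs \<in> G k (n-1)" by auto
    moreover then have "zs \<noteq> []" using G_mem(3)[of zs k "n-1"] assms by auto
    ultimately have "n \<in> set zs" by (cases zs) auto
    then show False using G_mem(1)[OF \<open>zs \<in> G k (n-1)\<close>] by auto
  qed
  have "card (G k n) = card (Cons n ` G k (n-1)) + card ((\<lambda>ys. ys@[n]) ` ?C)"
    unfolding G_dec[OF assms] by (rule card_Un_disjoint[OF _ _ disj]) (auto intro: finite_imageI simp: G_fin)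
  also have "card (Cons n ` G k (n-1)) = card (G k (n-1))"
    by (rule card_image) (auto simp: inj_on_def)
  also have "card ((\<lambda>ys. ys@[n]) ` ?C) = card ?C"
    by (rule card_image) (auto simp: inj_on_def)
  finally show ?thesis .
qed

lemma hd_G: assumes "n \<ge> 2" "k \<ge> 1"
  shows "card {xs \<in> G k n. xs ! 0 = n} = card (G k (n-1))"
proof -
  have "{xs \<in> G k n. xs ! 0 = n} = Cons n ` G k (n-1)"
  proof
    show "Cons n ` G k (n-1) \<subseteq> {xs \<in> G k n. xs ! 0 = n}"
      using G_dec[OF assms] by auto
  next
    show "{xs \<in> G k n. xs ! 0 = n} \<subseteq> Cons n ` G k (n-1)"
    proof
      fix xs assume xs: "xs \<in> {xs \<in> G k n. xs ! 0 = n}"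
      show "xs \<in> Cons n ` G k (n-1)"
      proof (rule ccontr)
        assume "xs \<notin> Cons n ` G k (n-1)"
        then obtain ys where e: "xs = ys @ [n]" and ys: "ys \<in> G k (n-1)"
          using xs G_dec[OF assms] by auto
        have "ys \<noteq> []" using G_mem(3)[OF ys] assms by auto
        then have "ys ! 0 = n" using xs e by (simp add: nth_append)
        then have "n \<in> set ys" using \<open>ys \<noteq> []\<close> by (metis nth_mem length_greater_0_conv)
        then show False using G_mem(1)[OF ys] by auto
      qed
    qed
  qed
  then show ?thesis by (simp add: card_image inj_on_def)
qed

lemma excl: assumes "m \<ge> 2" "xs \<in> G k m"
  shows "xs ! 0 = m \<longleftrightarrow> xs ! (m-1) \<noteq> m"
proof -
  note g = G_mem[OF assms(2)]
  obtain ys where "xs = m#ys \<or> xs = ys@[m]" using max_end[OF assms(2,1)] by blast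
  then have one: "xs ! 0 = m \<or> xs ! (m-1) = m"
  proof
    assume "xs = m#ys" then show ?thesis by simp
  next
    assume "xs = ys@[m]" then have "length ys = m - 1" using g by simp
    then show ?thesis using \<open>xs = ys@[m]\<close> by (simp add: nth_append)
  qed
  have "\<not> (xs ! 0 = m \<and> xs ! (m-1) = m)"
  proof
    assume "xs ! 0 = m \<and> xs ! (m-1) = m"
    then have "xs ! 0 = xs ! (m-1)" by simp
    then have "0 = m - 1" using g assms(1) by (simp add: nth_eq_iff_index_eq)
    then show False using assms(1) by simp
  qed
  then show ?thesis using one by blast
qed

lemma G_1: assumes "k \<ge> 1" shows "G k 1 = {[1]}"
  using assms by (auto simp: G_def has_consec_231_def has_consec_132_def has_pdv_k_def)

lemma G_1': assumes "k \<ge> 1" shows "G k (Suc 0) = {[Suc 0]}"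
  using G_1[OF assms] by simp

lemma card_G_1: assumes "k \<ge> 1" shows "card (G k 1) = 1"
  using G_1[OF assms] by simp

lemma rec_k1: assumes "n \<ge> 3"
  shows "card (G 1 n) = card (G 1 (n-1)) + card (G 1 (n-2))"
proof -
  have "{ys \<in> G 1 (n-1). \<not> (1 \<le> n-1 \<and> ys ! (n-1-1) = n-1)} = {ys \<in> G 1 (n-1). ys ! 0 = n-1}"
    using excl[of "n-1" _ 1] assms by auto
  then have "card (G 1 n) = card (G 1 (n-1)) + card {ys \<in> G 1 (n-1). ys ! 0 = n-1}"
    using card_G_dec[of n 1] assms by simp
  also have "card {ys \<in> G 1 (n-1). ys ! 0 = n-1} = card (G 1 (n-1-1))"
    using hd_G[of "n-1" 1] assms by simp
  finally show ?thesis by (simp add: numeral_2_eq_2)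
qed

lemma g2_k1: "card (G 1 2) = 1"
proof -
  have "{ys \<in> G 1 (2-1). \<not> (1 \<le> (2::nat)-1 \<and> ys ! (2-1-1) = 2-1)} = {}"
    using G_1[of 1] by simp
  then show ?thesis using card_G_dec[of 2 1] card_G_1[of 1] by (simp add: G_1')
qed

lemma fib_k1: "n \<ge> 1 \<Longrightarrow> card (G 1 n) = fib n"
proof (induction n rule: less_induct)
  case (less n)
  show ?case
  proof (cases "n \<le> 2")
    case True
    then have "n = 1 \<or> n = 2" using less.prems by auto
    then show ?thesis using card_G_1[of 1] g2_k1 by (auto simp: numeral_2_eq_2)
  next
    case False
    then obtain i where "n = 3 + i" using le_Suc_ex[of 3 n] by auto
    then obtain j where j: "n = Suc (Suc j)" "j \<ge> 1" by auto
    have "card (G 1 n) = card (G 1 (n-1)) + card (G 1 (n-2))" using rec_k1 False by simp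
    also have "\<dots> = fib (Suc j) + fib j" using less.IH j by simp
    finally show ?thesis using j by simp
  qed
qed

lemma double_k: assumes "k \<ge> 2" "n \<ge> 2" "n - 1 \<noteq> k"
  shows "card (G k n) = 2 * card (G k (n-1))"
proof -
  have "{ys \<in> G k (n-1). \<not> (k \<le> n-1 \<and> ys ! (n-1-k) = n-1)} = G k (n-1)"
  proof (cases "k \<le> n - 1")
    case False then show ?thesis by auto
  next
    case True
    define m where "m = n - 1"
    have mk: "k < m" "m \<ge> 3" using True assms unfolding m_def by auto
    have "\<And>ys. ys \<in> G k m \<Longrightarrow> ys ! (m-k) \<noteq> m"
    proof
      fix ys assume ys: "ys \<in> G k m" and e: "ys ! (m-k) = m"
      note g = G_mem[OF ys]
      have "ys ! 0 = m \<or> ys ! (m-1) = m" using excl[OF _ ys] mk by auto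
      then show False
      proof
        assume "ys ! 0 = m"
        then have "ys ! (m-k) = ys ! 0" using e by simp
        moreover have "m - k < length ys" "0 < length ys" using g mk assms by auto
        ultimately have "m - k = 0" using nth_eq_iff_index_eq[OF g(2)] by blast
        then show False using mk by simp
      next
        assume "ys ! (m-1) = m"
        then have "ys ! (m-k) = ys ! (m-1)" using e by simp
        moreover have "m - k < length ys" "m - 1 < length ys" using g mk assms by auto
        ultimately have "m - k = m - 1" using nth_eq_iff_index_eq[OF g(2)] by blast
        then show False using mk assms by simp
      qed
    qed
    then show ?thesis unfolding m_def by auto
  qed
  then show ?thesis using card_G_dec[of n k] assms by simp
qed

lemma at_k: assumes "k \<ge> 2"
  shows "card (G k (k+1)) = 2 * card (G k k) - card (G k (k-1))"
proof -
  have "{ys \<in> G k k. \<not> (k \<le> k \<and> ys ! (k-k) = k)} = G k k - {ys \<in> G k k. ys ! 0 = k}" by auto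
  then have "card {ys \<in> G k k. \<not> (k \<le> k \<and> ys ! (k-k) = k)} = card (G k k) - card (G k (k-1))"
    using hd_G[of k k] assms by (simp add: card_Diff_subset G_fin)
  moreover have "card (G k (k-1)) \<le> card (G k k)"
  proof -
    have "card {ys \<in> G k k. ys ! 0 = k} \<le> card (G k k)" by (rule card_mono) (auto simp: G_fin)
    then show ?thesis using hd_G[of k k] assms by simp
  qed
  ultimately show ?thesis using card_G_dec[of "k+1" k] assms by simp
qed

lemma small_k: assumes "k \<ge> 2" shows "1 \<le> n \<Longrightarrow> n \<le> k \<Longrightarrow> card (G k n) = 2 ^ (n-1)"
proof (induction n)
  case 0 then show ?case by simp
next
  case (Suc n)
  show ?case
  proof (cases "n = 0")
    case True then show ?thesis using card_G_1 assms by simp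
  next
    case False
    then have "card (G k (Suc n)) = 2 * card (G k n)" using double_k[of k "Suc n"] assms Suc.prems by simp
    then show ?thesis using Suc False by (cases n) auto
  qed
qed

lemma big_k: assumes "k \<ge> 2" "n \<ge> k + 1" shows "card (G k n) = 3 * 2 ^ (n-3)"
  using assms(2)
proof (induction n rule: dec_induct)
  case base
  obtain j where j: "k = j + 2" using assms(1) by (metis le_add_diff_inverse2)
  have "card (G k (k+1)) = 2 * 2 ^ (k - 1) - 2 ^ (k-1-1)"
    using at_k[OF assms(1)] small_k[OF assms(1), of k] small_k[OF assms(1), of "k-1"] assms(1) by simp
  also have "\<dots> = 3 * 2 ^ (k+1-3)" using j by simp
  finally show ?case .
next
  case (step m)
  have "card (G k (Suc m)) = 2 * card (G k m)" using double_k[of k "Suc m"] assms step.hyps by simp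
  moreover have "Suc m - 3 = Suc (m - 3)" using step.hyps assms by simp
  ultimately show ?case using step by simp
qed

theorem mainTheorem2:
  fixes n k :: nat
  assumes "n \<ge> 1" and "k \<ge> 1"
  shows "a_nk n k = (if k = 1 then fib n
                     else if n \<le> k then 2 ^ (n - 1)
                     else 3 * 2 ^ (n - 3))"
proof -
  have a: "a_nk n k = card (G k n)" by (simp add: a_nk_def G_def)
  show ?thesis
  proof (cases "k = 1")
    case True then show ?thesis using a fib_k1 assms by simp
  next
    case False
    then have k2: "k \<ge> 2" using assms by simp
    show ?thesis using a small_k[OF k2] big_k[OF k2] assms False by auto
  qed
qed

end
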